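(* Let $n\ge 0$, let $T$ be a triangulation of a regular polygon with $n+3$ vertices and let $\alpha,\alpha'$ be positive roots. Then $\operatorname{Hom}_{\mathcal{C}_T}(\alpha,\alpha')\neq 0$ if and only if there exists $i\in\operatorname{Supp}\alpha\cap\operatorname{Supp}\alpha'$ such that, denoting by $v_1,v_2$ the endpoints of $-\alpha_i$ and by $u_1,u_2$ (resp. $u_1',u_2'$) the endpoints of $\alpha$ (resp. $\alpha'$), and ordering the vertices of the polygon counterclockwise starting at $v_1$ (for a suitable choice of the labelling of the endpoints), one has $v_1<u_1\le u_1'<v_2<u_2\le u_2'$. In this case $\operatorname{Hom}_{\mathcal{C}_T}(\alpha,\alpha')$ is one-dimensional.
   Context: Diagonals of the polygon are called roots; those in $T$ are negative roots, indexed by a set $I$ (the one indexed by $i$ written $-\alpha_i$), and the others positive roots. $\operatorname{Supp}\alpha$ is the set of $i\in I$ with $-\alpha_i$ crossing $\alpha$. A pivoting elementary move $P_v$ with pivot $v$ sends a positive root $[v,w]$ to the positive root $[v,w+1]$, vertices labelled cyclically counterclockwise. $\mathcal{C}_T$ is the $\mathbb{C}$-linear additive category whose objects are direct sums of positive roots, with $\operatorname{Hom}(\alpha,\alpha')$ the $\mathbb{C}$-span of sequences of pivoting elementary moves from $\alpha$ to $\alpha'$ modulo the mesh relations: whenever a diagonal is sent to another by two consecutive pivoting moves with distinct pivots in the two possible orders, the two composites are equal, with the convention that a composite whose intermediate diagonal is a border edge or a diagonal of $T$ is replaced by zero; paths differing only by such a change in two consecutive moves are identified. *)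

theory Defs
  imports Complex_Main
begin

(* Polygon with N vertices labelled 0,...,N-1 cyclically counterclockwise.
   A diagonal is a two-element set {a,b} of non-adjacent vertices. *)

(* counterclockwise distance from vertex a to vertex x, i.e. the position of x
   when the vertices are ordered counterclockwise starting at a *)
definition cpos :: "nat \<Rightarrow> nat \<Rightarrow> nat \<Rightarrow> nat" where
  "cpos N a x = (x + N - a) mod N"

definition is_diag :: "nat \<Rightarrow> nat set \<Rightarrow> bool" where
  "is_diag N d \<longleftrightarrow> (\<exists>a b. d = {a, b} \<and> a < N \<and> b < N \<and> a \<noteq> b
      \<and> b \<noteq> Suc a mod N \<and> a \<noteq> Suc b mod N)"

(* two diagonals cross iff their endpoints strictly interleave *)
definition crosses :: "nat \<Rightarrow> nat set \<Rightarrow> nat set \<Rightarrow> bool" where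
  "crosses N d e \<longleftrightarrow> (\<exists>a b c x. d = {a, b} \<and> e = {c, x}
      \<and> 0 < cpos N a c \<and> cpos N a c < cpos N a b
      \<and> 0 < cpos N b x \<and> cpos N b x < cpos N b a)"

definition triangulation :: "nat \<Rightarrow> nat set set \<Rightarrow> bool" where
  "triangulation N T \<longleftrightarrow> (\<forall>d\<in>T. is_diag N d) \<and> (\<forall>d\<in>T. \<forall>e\<in>T. \<not> crosses N d e)
      \<and> (\<forall>d. is_diag N d \<and> d \<notin> T \<longrightarrow> (\<exists>e\<in>T. crosses N d e))"

definition pos_root :: "nat \<Rightarrow> nat set set \<Rightarrow> nat set \<Rightarrow> bool" where
  "pos_root N T d \<longleftrightarrow> is_diag N d \<and> d \<notin> T"

(* Supp alpha: the negative roots (elements of T, which serve as the index set I)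
   crossing alpha *)
definition supp :: "nat \<Rightarrow> nat set set \<Rightarrow> nat set \<Rightarrow> nat set set" where
  "supp N T \<alpha> = {i \<in> T. crosses N i \<alpha>}"

definition pivot_move :: "nat \<Rightarrow> nat set set \<Rightarrow> nat set \<Rightarrow> nat \<Rightarrow> nat set \<Rightarrow> bool" where
  "pivot_move N T d v d' \<longleftrightarrow> pos_root N T d \<and> pos_root N T d'
      \<and> (\<exists>w. d = {v, w} \<and> v \<noteq> w \<and> d' = {v, Suc w mod N})"

fun move_path :: "nat \<Rightarrow> nat set set \<Rightarrow> nat set \<Rightarrow> nat list \<Rightarrow> nat set \<Rightarrow> bool" where
  "move_path N T d [] d' \<longleftrightarrow> pos_root N T d \<and> d' = d"
| "move_path N T d (v # vs) d' \<longleftrightarrow> (\<exists>d1. pivot_move N T d v d1 \<and> move_path N T d1 vs d')"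

(* basis vector of the free C-vector space on sequences of moves *)
definition delta :: "'a \<Rightarrow> 'a \<Rightarrow> complex" where
  "delta p = (\<lambda>q. if q = p then 1 else 0)"

definition cspan :: "('a \<Rightarrow> complex) set \<Rightarrow> ('a \<Rightarrow> complex) set" where
  "cspan S = {f. \<exists>F c. finite F \<and> F \<subseteq> S \<and> f = (\<lambda>x. \<Sum>g\<in>F. c g * g x)}"

(* generators of the mesh relations in the span of paths alpha -> alpha':
   a path ps reaching the diagonal [a,b], followed by the two ways of reaching
   [a+1,b+1] (pivot a then pivot b+1, or pivot b then pivot a+1), followed by qs.
   A composite through a non-positive-root intermediate diagonal (border edge or
   element of T) is not a valid path and is replaced by zero. *)
definition mesh_gens :: "nat \<Rightarrow> nat set set \<Rightarrow> nat set \<Rightarrow> nat set \<Rightarrow> (nat list \<Rightarrow> complex) set" where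
  "mesh_gens N T \<alpha> \<alpha>' = {g. \<exists>ps qs a b. a \<noteq> b \<and> move_path N T \<alpha> ps {a, b}
      \<and> move_path N T {Suc a mod N, Suc b mod N} qs \<alpha>'
      \<and> g = (\<lambda>x. (if move_path N T \<alpha> (ps @ [a, Suc b mod N] @ qs) \<alpha>'
                   then delta (ps @ [a, Suc b mod N] @ qs) x else 0)
                - (if move_path N T \<alpha> (ps @ [b, Suc a mod N] @ qs) \<alpha>'
                   then delta (ps @ [b, Suc a mod N] @ qs) x else 0))}"

(* Hom_{C_T}(alpha, alpha') = span of paths modulo span of mesh_gens *)
definition hom_nonzero :: "nat \<Rightarrow> nat set set \<Rightarrow> nat set \<Rightarrow> nat set \<Rightarrow> bool" where
  "hom_nonzero N T \<alpha> \<alpha>' \<longleftrightarrow>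
     (\<exists>ps. move_path N T \<alpha> ps \<alpha>' \<and> delta ps \<notin> cspan (mesh_gens N T \<alpha> \<alpha>'))"

definition hom_dim :: "nat \<Rightarrow> nat set set \<Rightarrow> nat set \<Rightarrow> nat set \<Rightarrow> nat" where
  "hom_dim N T \<alpha> \<alpha>' = (LEAST k. \<exists>S. finite S \<and> card S = k
      \<and> (\<forall>s\<in>S. move_path N T \<alpha> s \<alpha>')
      \<and> (\<forall>ps. move_path N T \<alpha> ps \<alpha>' \<longrightarrow> delta ps \<in> cspan (delta ` S \<union> mesh_gens N T \<alpha> \<alpha>')))"

definition hom_criterion :: "nat \<Rightarrow> nat set set \<Rightarrow> nat set \<Rightarrow> nat set \<Rightarrow> bool" where
  "hom_criterion N T \<alpha> \<alpha>' \<longleftrightarrow> (\<exists>i\<in>supp N T \<alpha> \<inter> supp N T \<alpha>'.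
      \<exists>v1 v2 u1 u2 u1' u2'. i = {v1, v2} \<and> \<alpha> = {u1, u2} \<and> \<alpha>' = {u1', u2'}
        \<and> 0 < cpos N v1 u1 \<and> cpos N v1 u1 \<le> cpos N v1 u1'
        \<and> cpos N v1 u1' < cpos N v1 v2 \<and> cpos N v1 v2 < cpos N v1 u2
        \<and> cpos N v1 u2 \<le> cpos N v1 u2')"

end

theory Submission
  imports Defs
begin


lemma modeq_window:
  fixes u v N :: nat
  assumes "u \<le> v" "v < u + N"
  shows "(u mod N = v mod N) \<longleftrightarrow> u = v"
proof
  assume h: "u mod N = v mod N"
  have "N dvd v - u" using h assms(1) by (metis mod_eq_dvd_iff_nat)
  moreover have "v - u < N" using assms by linarith
  ultimately have "v - u = 0" by (metis dvd_imp_le le_antisym not_gr0 not_less)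
  thus "u = v" using assms(1) by simp
qed simp

lemma modeq_window2:
  fixes u v a N :: nat
  assumes "a \<le> u" "u < a + N" "a \<le> v" "v < a + N"
  shows "(u mod N = v mod N) \<longleftrightarrow> u = v"
  using modeq_window[of u v N] modeq_window[of v u N] assms
  by (cases "u \<le> v") auto

lemma is_diag_iff:
  assumes "a < N" "b < N"
  shows "is_diag N {a, b} \<longleftrightarrow> (a \<noteq> b \<and> b \<noteq> Suc a mod N \<and> a \<noteq> Suc b mod N)"
  unfolding is_diag_def using assms by (auto simp: doubleton_eq_iff)

lemma cpos_window:
  fixes a u v N :: nat
  assumes "a \<le> u" "u < a + N" "a \<le> v" "v < a + N"
  shows "cpos N (u mod N) (v mod N) = (if u \<le> v then v - u else v + N - u)"
proof -
  have N0: "N > 0" using assms by linarith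
  have "int (cpos N (u mod N) (v mod N)) = (int (v mod N) + int N - int (u mod N)) mod int N"
  proof -
    have le: "u mod N \<le> v mod N + N" using N0 by (meson mod_less_divisor less_imp_le_nat trans_le_add2)
    show ?thesis unfolding cpos_def using le by (simp add: zmod_int of_nat_diff)
  qed
  also have "\<dots> = (int v + int N - int u) mod int N"
  proof -
    have "(int v mod int N + int N - int u) mod int N = (int v + int N - int u) mod int N"
      by (metis add_diff_eq mod_add_left_eq mod_diff_left_eq)
    then show ?thesis by (simp add: zmod_int mod_diff_right_eq)
  qed
  also have "\<dots> = int (if u \<le> v then v - u else v + N - u)"
  proof (cases "u \<le> v")
    case True
    then have "int v + int N - int u = int (v - u) + int N" by simp
    moreover have "v - u < N" using True assms by linarith
    then have "(int (v - u) + int N) mod int N = int (v - u)"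
      by (metis mod_add_self2 mod_less of_nat_mod)
    moreover have "int v + int N - int u = (int v - int u) + int N" by simp
    ultimately show ?thesis using True by (simp only: mod_add_self2 of_nat_diff) simp
  next
    case False
    have "u \<le> v + N" using assms by linarith
    then have "int v + int N - int u = int (v + N - u)" by (simp add: of_nat_diff)
    moreover have lt: "v + N - u < N" using False `u \<le> v + N` by (simp add: less_diff_conv2)
    ultimately have "(int v + int N - int u) mod int N = int ((v + N - u) mod N)"
      by (simp only: zmod_int)
    also have "\<dots> = int (v + N - u)" using lt by simp
    finally show ?thesis using False by simp
  qed
  finally show ?thesis by (simp only: of_nat_eq_iff)
qed

lemma crosses_expand:
  "crosses N {a1, b1} {c1, x1} \<longleftrightarrow>
    (let C = (\<lambda>a b c x. 0 < cpos N a c \<and> cpos N a c < cpos N a b \<and> 0 < cpos N b x \<and> cpos N b x < cpos N b a)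
     in C a1 b1 c1 x1 \<or> C a1 b1 x1 c1 \<or> C b1 a1 c1 x1 \<or> C b1 a1 x1 c1)"
  unfolding crosses_def Let_def doubleton_eq_iff by blast

lemma crosses_window:
  fixes a p r s t N :: nat
  assumes "a \<le> p" "p < r" "r < a + N" "a \<le> s" "s < a + N" "a \<le> t" "t < a + N"
  shows "crosses N {p mod N, r mod N} {s mod N, t mod N} \<longleftrightarrow>
     ((p < s \<and> s < r \<and> (t < p \<or> r < t)) \<or> (p < t \<and> t < r \<and> (s < p \<or> r < s)))"
proof -
  have w: "\<And>u v. u \<in> {p, r, s, t} \<Longrightarrow> v \<in> {p, r, s, t} \<Longrightarrow>
      cpos N (u mod N) (v mod N) = (if u \<le> v then v - u else v + N - u)"
    using assms by (intro cpos_window[of a]) auto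
  show ?thesis unfolding crosses_expand Let_def
    by (simp only: w insert_iff simp_thms) (use assms in \<open>auto split: if_splits\<close>)
qed



definition good :: "nat \<Rightarrow> nat \<times> nat \<Rightarrow> bool" where
  "good N q \<longleftrightarrow> fst q + 2 \<le> snd q \<and> snd q + 2 \<le> fst q + N"
definition SS :: "nat \<Rightarrow> nat \<times> nat \<Rightarrow> nat set" where
  "SS N q = {fst q mod N, snd q mod N}"
definition okl :: "nat \<Rightarrow> nat set set \<Rightarrow> nat \<times> nat \<Rightarrow> bool" where
  "okl N T q \<longleftrightarrow> good N q \<and> SS N q \<notin> T"
definition stp :: "nat \<times> nat \<Rightarrow> bool \<Rightarrow> nat \<times> nat" where
  "stp q b = (if b then (Suc (fst q), snd q) else (fst q, Suc (snd q)))"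
definition pvt :: "nat \<Rightarrow> nat \<times> nat \<Rightarrow> bool \<Rightarrow> nat" where
  "pvt N q b = (if b then snd q mod N else fst q mod N)"
fun pivs :: "nat \<Rightarrow> nat \<times> nat \<Rightarrow> bool list \<Rightarrow> nat list" where
  "pivs N q [] = []"
| "pivs N q (b # w) = pvt N q b # pivs N (stp q b) w"
fun walk :: "nat \<times> nat \<Rightarrow> bool list \<Rightarrow> nat \<times> nat" where
  "walk q [] = q"
| "walk q (b # w) = walk (stp q b) w"
fun okp :: "nat \<Rightarrow> nat set set \<Rightarrow> nat \<times> nat \<Rightarrow> bool list \<Rightarrow> bool" where
  "okp N T q [] = okl N T q"
| "okp N T q (b # w) = (okl N T q \<and> okp N T (stp q b) w)"
definition cnt :: "bool \<Rightarrow> bool list \<Rightarrow> nat" where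
  "cnt b w = length (filter (\<lambda>z. z = b) w)"

lemma cnt_simps[simp]: "cnt b [] = 0" "cnt b (z # w) = (if z = b then Suc (cnt b w) else cnt b w)"
  "cnt b (u @ v) = cnt b u + cnt b v" "cnt b (replicate k z) = (if z = b then k else 0)"
  by (auto simp: cnt_def)

lemma walk_eq: "walk q w = (fst q + cnt True w, snd q + cnt False w)"
  by (induction w arbitrary: q) (auto simp: stp_def)

lemma pivs_append: "pivs N q (u @ v) = pivs N q u @ pivs N (walk q u) v"
  by (induction u arbitrary: q) auto

lemma walk_append: "walk q (u @ v) = walk (walk q u) v"
  by (induction u arbitrary: q) auto

lemma okp_hd: "okp N T q w \<Longrightarrow> okl N T q"
  by (cases w) auto

lemma okp_append: "okp N T q (u @ v) \<longleftrightarrow> okp N T q u \<and> okp N T (walk q u) v"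
  by (induction u arbitrary: q) (auto dest: okp_hd)

lemma okp_last: "okp N T q w \<Longrightarrow> okl N T (walk q w)"
  by (induction w arbitrary: q) auto

lemma length_pivs[simp]: "length (pivs N q w) = length w"
  by (induction w arbitrary: q) auto

lemma diag_SS:
  assumes "fst q < snd q" "snd q < fst q + N"
  shows "is_diag N (SS N q) \<longleftrightarrow> good N q"
proof -
  obtain x y where q: "q = (x, y)" by (cases q)
  have N0: "N > 0" using assms by simp
  have "is_diag N (SS N q) \<longleftrightarrow> (x mod N \<noteq> y mod N \<and> y mod N \<noteq> Suc (x mod N) mod N \<and> x mod N \<noteq> Suc (y mod N) mod N)"
    unfolding SS_def q using N0 by (simp add: is_diag_iff)
  also have "\<dots> \<longleftrightarrow> (x mod N \<noteq> y mod N \<and> y mod N \<noteq> Suc x mod N \<and> (x + N) mod N \<noteq> Suc y mod N)"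
    by (simp add: mod_Suc_eq)
  also have "\<dots> \<longleftrightarrow> (x \<noteq> y \<and> y \<noteq> Suc x \<and> x + N \<noteq> Suc y)"
  proof -
    have lt: "x < y" "y < x + N" using assms q by auto
    have e1: "(x mod N = y mod N) = (x = y)" by (rule modeq_window) (use lt in auto)
    have e2': "(Suc x mod N = y mod N) = (Suc x = y)" by (rule modeq_window) (use lt in auto)
    have e2: "(y mod N = Suc x mod N) = (y = Suc x)" using e2' by metis
    have e3: "(Suc y mod N = (x + N) mod N) = (Suc y = x + N)" by (rule modeq_window) (use lt in auto)
    have e3: "((x + N) mod N = Suc y mod N) = (x + N = Suc y)" using e3 by metis
    show ?thesis by (simp only: e1 e2 e3)
  qed
  also have "\<dots> \<longleftrightarrow> good N q" unfolding good_def q using assms q by auto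
  finally show ?thesis .
qed

lemma good_ne: "good N q \<Longrightarrow> fst q mod N \<noteq> snd q mod N"
  unfolding good_def using modeq_window[of "fst q" "snd q" N] by auto

lemma good_lt: "good N q \<Longrightarrow> fst q < snd q \<and> snd q < fst q + N"
  unfolding good_def by auto

lemma pos_root_SS: "good N q \<Longrightarrow> pos_root N T (SS N q) \<longleftrightarrow> okl N T q"
  unfolding pos_root_def okl_def using diag_SS good_lt by blast

lemma stp_lt: "good N q \<Longrightarrow> fst (stp q b) < snd (stp q b) \<and> snd (stp q b) < fst (stp q b) + N"
  unfolding good_def stp_def by auto

lemma SS_stp: "SS N (stp q b) = (if b then {snd q mod N, Suc (fst q mod N) mod N} else {fst q mod N, Suc (snd q mod N) mod N})"
  unfolding SS_def stp_def by (auto simp: mod_Suc_eq)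

lemma pm_step:
  assumes g: "good N q"
  shows "pivot_move N T (SS N q) v d1 \<longleftrightarrow>
    (\<exists>b. v = pvt N q b \<and> d1 = SS N (stp q b) \<and> okl N T q \<and> okl N T (stp q b))"
proof
  assume h: "pivot_move N T (SS N q) v d1"
  then obtain w where w: "SS N q = {v, w}" "v \<noteq> w" "d1 = {v, Suc w mod N}"
    unfolding pivot_move_def by blast
  have ne: "fst q mod N \<noteq> snd q mod N" using good_ne[OF g] .
  have pr: "pos_root N T (SS N q)" "pos_root N T d1" using h unfolding pivot_move_def by auto
  from w(1,2) have "(v = snd q mod N \<and> w = fst q mod N) \<or> (v = fst q mod N \<and> w = snd q mod N)"
    unfolding SS_def by (auto simp: doubleton_eq_iff)
  then obtain b where b: "v = pvt N q b" "d1 = SS N (stp q b)"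
    using w(3) unfolding pvt_def SS_stp by (metis insert_commute)
  have "okl N T q" using pr(1) pos_root_SS[OF g] by blast
  moreover have "okl N T (stp q b)"
    using pr(2) b(2) diag_SS[of "stp q b" N] stp_lt[OF g, of b] unfolding pos_root_def okl_def by auto
  ultimately show "\<exists>b. v = pvt N q b \<and> d1 = SS N (stp q b) \<and> okl N T q \<and> okl N T (stp q b)"
    using b by blast
next
  assume "\<exists>b. v = pvt N q b \<and> d1 = SS N (stp q b) \<and> okl N T q \<and> okl N T (stp q b)"
  then obtain b where b: "v = pvt N q b" "d1 = SS N (stp q b)" "okl N T q" "okl N T (stp q b)" by blast
  have ne: "fst q mod N \<noteq> snd q mod N" using good_ne[OF g] .
  have pr: "pos_root N T (SS N q)" "pos_root N T d1"
    using b pos_root_SS[OF g] pos_root_SS[of N "stp q b" T] unfolding okl_def by auto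
  show "pivot_move N T (SS N q) v d1"
    unfolding pivot_move_def
  proof (intro conjI pr)
    show "\<exists>w. SS N q = {v, w} \<and> v \<noteq> w \<and> d1 = {v, Suc w mod N}"
    proof (cases b)
      case True
      then show ?thesis using b ne unfolding pvt_def SS_stp by (intro exI[of _ "fst q mod N"]) (auto simp: SS_def)
    next
      case False
      then show ?thesis using b ne unfolding pvt_def SS_stp by (intro exI[of _ "snd q mod N"]) (auto simp: SS_def)
    qed
  qed
qed

lemma mp_iff:
  assumes "good N q"
  shows "move_path N T (SS N q) ps d' \<longleftrightarrow> (\<exists>w. ps = pivs N q w \<and> okp N T q w \<and> d' = SS N (walk q w))"
  using assms
proof (induction ps arbitrary: q)
  case Nil
  show ?case
  proof
    assume "move_path N T (SS N q) [] d'"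
    then show "\<exists>w. [] = pivs N q w \<and> okp N T q w \<and> d' = SS N (walk q w)"
      using pos_root_SS[OF Nil.prems] by (intro exI[of _ "[]"]) auto
  next
    assume "\<exists>w. [] = pivs N q w \<and> okp N T q w \<and> d' = SS N (walk q w)"
    then obtain w where "[] = pivs N q w" "okp N T q w" "d' = SS N (walk q w)" by blast
    moreover then have "w = []" by (metis length_0_conv length_pivs)
    ultimately show "move_path N T (SS N q) [] d'" using pos_root_SS[OF Nil.prems] by auto
  qed
next
  case (Cons v ps)
  show ?case
  proof
    assume "move_path N T (SS N q) (v # ps) d'"
    then obtain d1 where d1: "pivot_move N T (SS N q) v d1" "move_path N T d1 ps d'" by auto
    then obtain b where b: "v = pvt N q b" "d1 = SS N (stp q b)" "okl N T q" "okl N T (stp q b)"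
      using pm_step[OF Cons.prems] by blast
    have "good N (stp q b)" using b(4) okl_def by blast
    then obtain w where w: "ps = pivs N (stp q b) w" "okp N T (stp q b) w" "d' = SS N (walk (stp q b) w)"
      using Cons.IH d1(2) b(2) by blast
    show "\<exists>w. v # ps = pivs N q w \<and> okp N T q w \<and> d' = SS N (walk q w)"
      using w b by (intro exI[of _ "b # w"]) auto
  next
    assume "\<exists>w. v # ps = pivs N q w \<and> okp N T q w \<and> d' = SS N (walk q w)"
    then obtain w where w: "v # ps = pivs N q w" "okp N T q w" "d' = SS N (walk q w)" by blast
    then obtain b w' where bw: "w = b # w'" by (cases w) auto
    have h: "v = pvt N q b" "ps = pivs N (stp q b) w'" "okl N T q" "okp N T (stp q b) w'"
      using w bw by auto
    have o2: "okl N T (stp q b)" using h(4) okp_hd by blast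
    then have "good N (stp q b)" using okl_def by blast
    then have "move_path N T (SS N (stp q b)) ps d'"
      using Cons.IH h w bw by auto
    moreover have "pivot_move N T (SS N q) v (SS N (stp q b))"
      using pm_step[OF Cons.prems] h o2 by blast
    ultimately show "move_path N T (SS N q) (v # ps) d'" by auto
  qed
qed



lemma cspan_base: "g \<in> S \<Longrightarrow> g \<in> cspan S"
  unfolding cspan_def by (rule CollectI, rule exI[of _ "{g}"], rule exI[of _ "\<lambda>_. 1"]) auto

lemma cspan_zero: "(\<lambda>x. 0) \<in> cspan S"
  unfolding cspan_def by (rule CollectI, rule exI[of _ "{}"]) auto

lemma cspan_mono: "S \<subseteq> S' \<Longrightarrow> cspan S \<subseteq> cspan S'"
  unfolding cspan_def by blast

lemma cspan_add:
  assumes "f \<in> cspan S" "h \<in> cspan S"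
  shows "(\<lambda>x. f x + h x) \<in> cspan S"
proof -
  obtain F1 c1 where 1: "finite F1" "F1 \<subseteq> S" "f = (\<lambda>x. \<Sum>g\<in>F1. c1 g * g x)"
    using assms(1) unfolding cspan_def by blast
  obtain F2 c2 where 2: "finite F2" "F2 \<subseteq> S" "h = (\<lambda>x. \<Sum>g\<in>F2. c2 g * g x)"
    using assms(2) unfolding cspan_def by blast
  define c where "c g = (if g \<in> F1 then c1 g else 0) + (if g \<in> F2 then c2 g else 0)" for g
  have fin: "finite (F1 \<union> F2)" using 1 2 by simp
  have "(\<Sum>g\<in>F1 \<union> F2. c g * g x) = (\<Sum>g\<in>F1. c1 g * g x) + (\<Sum>g\<in>F2. c2 g * g x)" for x
  proof -
    have "(\<Sum>g\<in>F1 \<union> F2. c g * g x) = (\<Sum>g\<in>F1 \<union> F2. (if g \<in> F1 then c1 g * g x else 0))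
        + (\<Sum>g\<in>F1 \<union> F2. (if g \<in> F2 then c2 g * g x else 0))"
    proof -
      have "c g * g x = (if g \<in> F1 then c1 g * g x else 0) + (if g \<in> F2 then c2 g * g x else 0)" for g
        unfolding c_def by (simp add: distrib_right)
      then show ?thesis by (simp add: sum.distrib)
    qed
    also have "\<dots> = (\<Sum>g\<in>(F1 \<union> F2) \<inter> F1. c1 g * g x) + (\<Sum>g\<in>(F1 \<union> F2) \<inter> F2. c2 g * g x)"
      using sum.inter_restrict[OF fin, of "\<lambda>g. c1 g * g x" F1] sum.inter_restrict[OF fin, of "\<lambda>g. c2 g * g x" F2]
      by simp
    also have "(F1 \<union> F2) \<inter> F1 = F1" by blast
    also have "(F1 \<union> F2) \<inter> F2 = F2" by blast
    finally show ?thesis .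
  qed
  then show ?thesis unfolding cspan_def using 1 2 fin
    by (intro CollectI exI[of _ "F1 \<union> F2"] exI[of _ c]) auto
qed

lemma cspan_smult:
  assumes "f \<in> cspan S"
  shows "(\<lambda>x. k * f x) \<in> cspan S"
proof -
  obtain F1 c1 where 1: "finite F1" "F1 \<subseteq> S" "f = (\<lambda>x. \<Sum>g\<in>F1. c1 g * g x)"
    using assms(1) unfolding cspan_def by blast
  show ?thesis unfolding cspan_def using 1
    by (intro CollectI exI[of _ F1] exI[of _ "\<lambda>g. k * c1 g"]) (auto simp: sum_distrib_left mult.assoc)
qed

lemma cspan_diff:
  assumes "f \<in> cspan S" "h \<in> cspan S"
  shows "(\<lambda>x. f x - h x) \<in> cspan S"
proof -
  have "(\<lambda>x. f x + (\<lambda>x. (-1) * h x) x) \<in> cspan S"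
    using cspan_add[OF assms(1) cspan_smult[OF assms(2)]] .
  then show ?thesis by simp
qed

lemma cspan_diff_add:
  assumes "(\<lambda>x. f x - h x) \<in> cspan S" "h \<in> cspan S"
  shows "f \<in> cspan S"
proof -
  have "(\<lambda>x. (\<lambda>x. f x - h x) x + h x) \<in> cspan S" using cspan_add[OF assms] .
  then show ?thesis by simp
qed

lemma cspan_trans:
  assumes "(\<lambda>x. f x - g x) \<in> cspan S" "(\<lambda>x. g x - h x) \<in> cspan S"
  shows "(\<lambda>x. f x - h x) \<in> cspan S"
proof -
  have "(\<lambda>x. (\<lambda>x. f x - g x) x + (\<lambda>x. g x - h x) x) \<in> cspan S" using cspan_add[OF assms] .
  then show ?thesis by simp
qed

lemma cspan_lin:
  assumes "finite A" "\<And>g. g \<in> S \<Longrightarrow> (\<Sum>P\<in>A. g P) = 0" "f \<in> cspan S"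
  shows "(\<Sum>P\<in>A. f P) = 0"
proof -
  obtain F c where 1: "finite F" "F \<subseteq> S" "f = (\<lambda>x. \<Sum>g\<in>F. c g * g x)"
    using assms(3) unfolding cspan_def by blast
  have "(\<Sum>P\<in>A. f P) = (\<Sum>P\<in>A. \<Sum>g\<in>F. c g * g P)" using 1 by simp
  also have "\<dots> = (\<Sum>g\<in>F. \<Sum>P\<in>A. c g * g P)" by (rule sum.swap)
  also have "\<dots> = (\<Sum>g\<in>F. c g * (\<Sum>P\<in>A. g P))" by (simp add: sum_distrib_left)
  also have "\<dots> = 0" using 1 assms(2) by (intro sum.neutral) auto
  finally show ?thesis .
qed

fun ninv :: "bool \<Rightarrow> bool list \<Rightarrow> nat" where
  "ninv c [] = 0"
| "ninv c (z # u) = (if z = c then 0 else cnt c u) + ninv c u"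

definition canon :: "bool \<Rightarrow> bool list \<Rightarrow> bool list" where
  "canon c u = replicate (cnt c u) c @ replicate (cnt (\<not> c) u) (\<not> c)"

lemma ninv_app: "ninv c (u @ v) = ninv c u + ninv c v + cnt (\<not> c) u * cnt c v"
  by (induction u) auto

lemma ninv_swap: "ninv c (u1 @ [\<not> c, c] @ u2) = Suc (ninv c (u1 @ [c, \<not> c] @ u2))"
  by (simp add: ninv_app)

lemma cnt_canon[simp]: "cnt b (canon c u) = cnt b u"
proof -
  have "cnt True u + cnt False u = length u" for u
    by (induction u) auto
  then show ?thesis unfolding canon_def by (cases b; cases c) auto
qed

lemma canon_cons: "z = c \<or> cnt c u = 0 \<Longrightarrow> canon c (z # u) = z # canon c u"
  unfolding canon_def by (cases z; cases c) auto

lemma ninv0: "ninv c u = 0 \<Longrightarrow> u = canon c u"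
proof (induction u)
  case Nil
  then show ?case by (simp add: canon_def)
next
  case (Cons z u)
  then have u: "u = canon c u" and z: "z = c \<or> cnt c u = 0" by (auto split: if_splits)
  show ?case using canon_cons[OF z] u by simp
qed

lemma ninv_pos: "ninv c u \<noteq> 0 \<Longrightarrow> \<exists>u1 u2. u = u1 @ [\<not> c, c] @ u2"
proof (induction u)
  case Nil
  then show ?case by simp
next
  case (Cons z u)
  show ?case
  proof (cases "ninv c u = 0")
    case False
    then obtain u1 u2 where "u = u1 @ [\<not> c, c] @ u2" using Cons.IH by blast
    then show ?thesis by (intro exI[of _ "z # u1"] exI[of _ u2]) simp
  next
    case True
    then have u: "u = canon c u" by (rule ninv0)
    have zc: "z \<noteq> c" "cnt c u \<noteq> 0" using Cons.prems True by (auto split: if_splits)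
    then obtain k where "cnt c u = Suc k" by (cases "cnt c u") auto
    then have "u = c # (replicate k c @ replicate (cnt (\<not> c) u) (\<not> c))"
      using u unfolding canon_def by (metis append_Cons replicate_Suc)
    then show ?thesis using zc by (intro exI[of _ "[]"] exI[of _ "replicate k c @ replicate (cnt (\<not> c) u) (\<not> c)"]) auto
  qed
qed

lemma canon_swap: "canon c (u1 @ [c, \<not> c] @ u2) = canon c (u1 @ [\<not> c, c] @ u2)"
  unfolding canon_def by simp

lemma pivs_inj: "okp N T q w \<Longrightarrow> pivs N q w = pivs N q w' \<Longrightarrow> w = w'"
proof (induction w arbitrary: q w')
  case Nil
  then show ?case by (metis length_0_conv length_pivs)
next
  case (Cons b w)
  obtain b' w'' where w': "w' = b' # w''" using Cons.prems(2) by (cases w') auto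
  have g: "good N q" using Cons.prems(1) okl_def by auto
  have "pvt N q b = pvt N q b'" using Cons.prems(2) w' by simp
  then have bb: "b = b'" using good_ne[OF g] unfolding pvt_def by (auto split: if_splits)
  then have "pivs N (stp q b) w = pivs N (stp q b) w''" using Cons.prems(2) w' by simp
  moreover have "okp N T (stp q b) w" using Cons.prems(1) by simp
  ultimately have "w = w''" using Cons.IH[of "stp q b" w''] by blast
  then show ?case using bb w' by simp
qed

lemma mesh_mem:
  assumes "a \<noteq> b" "move_path N T \<alpha> ps {a, b}" "move_path N T {Suc a mod N, Suc b mod N} qs \<alpha>'"
  shows "(\<lambda>x. (if move_path N T \<alpha> (ps @ [a, Suc b mod N] @ qs) \<alpha>'
                   then delta (ps @ [a, Suc b mod N] @ qs) x else 0)
                - (if move_path N T \<alpha> (ps @ [b, Suc a mod N] @ qs) \<alpha>'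
                   then delta (ps @ [b, Suc a mod N] @ qs) x else 0)) \<in> cspan (mesh_gens N T \<alpha> \<alpha>')"
  by (rule cspan_base) (unfold mesh_gens_def, use assms in blast)

lemma mp_word:
  assumes "good N p" "okp N T p w" "move_path N T (SS N p) (pivs N p w') d"
  shows "move_path N T (SS N p) (pivs N p w') d \<longleftrightarrow> True"
  using assms by simp

lemma mp_pivs:
  assumes "good N p" "okp N T p w"
  shows "move_path N T (SS N p) (pivs N p w) d \<longleftrightarrow> d = SS N (walk p w)"
proof
  assume "move_path N T (SS N p) (pivs N p w) d"
  then obtain w' where "pivs N p w = pivs N p w'" "okp N T p w'" "d = SS N (walk p w')"
    using mp_iff[OF assms(1)] by blast
  moreover then have "w = w'" using pivs_inj assms(2) by blast
  ultimately show "d = SS N (walk p w)" by simp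
qed (use mp_iff[OF assms(1)] assms(2) in blast)

lemma mp_pivs2:
  assumes "good N p"
  shows "move_path N T (SS N p) (pivs N p w) d \<longleftrightarrow> okp N T p w \<and> d = SS N (walk p w)"
proof
  assume "move_path N T (SS N p) (pivs N p w) d"
  then obtain w' where "pivs N p w = pivs N p w'" "okp N T p w'" "d = SS N (walk p w')"
    using mp_iff[OF assms(1)] by blast
  moreover then have "w' = w" using pivs_inj by metis
  ultimately show "okp N T p w \<and> d = SS N (walk p w)" by simp
qed (use mp_iff[OF assms(1)] in blast)

lemma mesh_swap:
  assumes g: "good N p" and bb: "bb = (\<not> ba)"
    and ok: "okp N T p (pre @ [ba, bb] @ suf)" and e: "SS N (walk p (pre @ [ba, bb] @ suf)) = \<alpha>'"
  shows "(okp N T p (pre @ [bb, ba] @ suf) \<and>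
      (\<lambda>x. delta (pivs N p (pre @ [ba, bb] @ suf)) x - delta (pivs N p (pre @ [bb, ba] @ suf)) x)
        \<in> cspan (mesh_gens N T (SS N p) \<alpha>'))
    \<or> delta (pivs N p (pre @ [ba, bb] @ suf)) \<in> cspan (mesh_gens N T (SS N p) \<alpha>')"
proof -
  define q where "q = walk p pre"
  define q2 where "q2 = (Suc (fst q), Suc (snd q))"
  have okpre: "okp N T p pre" and okq: "okp N T q ([ba, bb] @ suf)"
    using ok unfolding q_def okp_append by auto
  have gq: "good N q" using okq okl_def by (cases "[ba,bb] @ suf") auto
  have wq2: "walk q [ba, bb] = q2" "walk q [bb, ba] = q2" using bb unfolding q2_def by (auto simp: walk_eq)
  have okq2: "okp N T q2 suf" using okq wq2 okp_append[of N T q "[ba,bb]" suf] by simp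
  have gq2: "good N q2" using okp_hd[OF okq2] okl_def by auto
  define ps where "ps = pivs N p pre"
  define qs where "qs = pivs N q2 suf"
  have W1: "walk p (pre @ [ba, bb] @ suf) = walk q2 suf" "walk p (pre @ [bb, ba] @ suf) = walk q2 suf"
    using wq2 unfolding q_def by (simp_all only: walk_append append_assoc[symmetric])
  have mp1: "move_path N T (SS N p) ps (SS N q)"
    unfolding ps_def q_def mp_pivs2[OF g] using okpre by simp
  have mp2: "move_path N T (SS N q2) qs \<alpha>'"
    unfolding qs_def mp_pivs2[OF gq2] using okq2 e W1 by simp
  have P: "pivs N p (pre @ [ba, bb] @ suf) = ps @ [pvt N q ba, pvt N (stp q ba) bb] @ qs"
          "pivs N p (pre @ [bb, ba] @ suf) = ps @ [pvt N q bb, pvt N (stp q bb) ba] @ qs"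
    using wq2 unfolding ps_def qs_def q_def by (simp_all add: pivs_append)
  obtain a b where ab: "a \<noteq> b" "SS N q = {a, b}" "SS N q2 = {Suc a mod N, Suc b mod N}"
    "pvt N q ba = a" "pvt N (stp q ba) bb = Suc b mod N"
    "pvt N q bb = b" "pvt N (stp q bb) ba = Suc a mod N"
  proof (cases ba)
    case True
    have f: "pvt N q ba = snd q mod N" "pvt N (stp q ba) bb = Suc (fst q mod N) mod N"
      "pvt N q bb = fst q mod N" "pvt N (stp q bb) ba = Suc (snd q mod N) mod N"
      using True bb by (simp_all add: pvt_def stp_def mod_Suc_eq)
    have h: "SS N q = {snd q mod N, fst q mod N}" "SS N q2 = {Suc (snd q mod N) mod N, Suc (fst q mod N) mod N}"
      by (simp_all add: SS_def q2_def mod_Suc_eq insert_commute)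
    have ne: "snd q mod N \<noteq> fst q mod N" using good_ne[OF gq] by simp
    show ?thesis by (rule that[OF ne h f])
  next
    case False
    have f: "pvt N q ba = fst q mod N" "pvt N (stp q ba) bb = Suc (snd q mod N) mod N"
      "pvt N q bb = snd q mod N" "pvt N (stp q bb) ba = Suc (fst q mod N) mod N"
      using False bb by (simp_all add: pvt_def stp_def mod_Suc_eq)
    have h: "SS N q = {fst q mod N, snd q mod N}" "SS N q2 = {Suc (fst q mod N) mod N, Suc (snd q mod N) mod N}"
      by (simp_all add: SS_def q2_def mod_Suc_eq)
    have ne: "fst q mod N \<noteq> snd q mod N" using good_ne[OF gq] by simp
    show ?thesis by (rule that[OF ne h f])
  qed
  have P1: "ps @ [a, Suc b mod N] @ qs = pivs N p (pre @ [ba, bb] @ suf)" using P(1) ab(4,5) by simp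
  have P2: "ps @ [b, Suc a mod N] @ qs = pivs N p (pre @ [bb, ba] @ suf)" using P(2) ab(6,7) by simp
  have G: "(\<lambda>x. (if move_path N T (SS N p) (pivs N p (pre @ [ba, bb] @ suf)) \<alpha>'
                   then delta (pivs N p (pre @ [ba, bb] @ suf)) x else 0)
                - (if move_path N T (SS N p) (pivs N p (pre @ [bb, ba] @ suf)) \<alpha>'
                   then delta (pivs N p (pre @ [bb, ba] @ suf)) x else 0)) \<in> cspan (mesh_gens N T (SS N p) \<alpha>')"
    unfolding P1[symmetric] P2[symmetric] by (rule mesh_mem) (use ab(1) ab(2)[symmetric] ab(3)[symmetric] mp1 mp2 in simp_all)
  have M1: "move_path N T (SS N p) (pivs N p (pre @ [ba, bb] @ suf)) \<alpha>'"
    using mp_pivs2[OF g] ok e by simp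
  have M2: "move_path N T (SS N p) (pivs N p (pre @ [bb, ba] @ suf)) \<alpha>' \<longleftrightarrow> okp N T p (pre @ [bb, ba] @ suf)"
    unfolding mp_pivs2[OF g] using e W1 by simp
  show ?thesis
  proof (cases "okp N T p (pre @ [bb, ba] @ suf)")
    case True
    then show ?thesis using G M1 M2 by simp
  next
    case False
    then show ?thesis using G M1 M2 by simp
  qed
qed

lemma sort_ctx:
  assumes g: "good N p"
  shows "okp N T p (pre @ u @ suf) \<Longrightarrow> SS N (walk p (pre @ u @ suf)) = \<alpha>' \<Longrightarrow>
    delta (pivs N p (pre @ u @ suf)) \<in> cspan (mesh_gens N T (SS N p) \<alpha>') \<or>
    (okp N T p (pre @ canon c u @ suf) \<and>
     (\<lambda>x. delta (pivs N p (pre @ u @ suf)) x - delta (pivs N p (pre @ canon c u @ suf)) x)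
        \<in> cspan (mesh_gens N T (SS N p) \<alpha>'))"
proof (induction "ninv c u" arbitrary: u rule: less_induct)
  case less
  let ?M = "cspan (mesh_gens N T (SS N p) \<alpha>')"
  show ?case
  proof (cases "ninv c u = 0")
    case True
    then have "canon c u = u" using ninv0 by metis
    then show ?thesis using less.prems cspan_zero[of "mesh_gens N T (SS N p) \<alpha>'"] by simp
  next
    case False
    then obtain u1 u2 where u: "u = u1 @ [\<not> c, c] @ u2" using ninv_pos by blast
    define u' where "u' = u1 @ [c, \<not> c] @ u2"
    have W: "pre @ u @ suf = (pre @ u1) @ [\<not> c, c] @ (u2 @ suf)"
         "pre @ u' @ suf = (pre @ u1) @ [c, \<not> c] @ (u2 @ suf)" unfolding u u'_def by simp_all
    have sw: "(okp N T p (pre @ u' @ suf) \<and>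
      (\<lambda>x. delta (pivs N p (pre @ u @ suf)) x - delta (pivs N p (pre @ u' @ suf)) x) \<in> ?M)
      \<or> delta (pivs N p (pre @ u @ suf)) \<in> ?M"
      using mesh_swap[OF g, where ba="\<not> c" and bb=c and pre="pre @ u1" and suf="u2 @ suf" and T=T and \<alpha>'=\<alpha>'] less.prems unfolding W by simp
    show ?thesis
    proof (cases "delta (pivs N p (pre @ u @ suf)) \<in> ?M")
      case True
      then show ?thesis by simp
    next
      case nM: False
      then have ok': "okp N T p (pre @ u' @ suf)"
        and d1: "(\<lambda>x. delta (pivs N p (pre @ u @ suf)) x - delta (pivs N p (pre @ u' @ suf)) x) \<in> ?M"
        using sw by auto
      have lt: "ninv c u' < ninv c u" unfolding u u'_def using ninv_swap by simp
      have we: "walk p (pre @ u' @ suf) = walk p (pre @ u @ suf)" unfolding u u'_def by (simp add: walk_eq)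
      have cu: "canon c u' = canon c u" unfolding u u'_def canon_def by simp
      have IH: "delta (pivs N p (pre @ u' @ suf)) \<in> ?M \<or>
          (okp N T p (pre @ canon c u' @ suf) \<and>
           (\<lambda>x. delta (pivs N p (pre @ u' @ suf)) x - delta (pivs N p (pre @ canon c u' @ suf)) x) \<in> ?M)"
        using less.hyps[OF lt] ok' we less.prems(2) by simp
      show ?thesis
      proof (cases "delta (pivs N p (pre @ u' @ suf)) \<in> ?M")
        case True
        then show ?thesis using cspan_diff_add[OF d1] by blast
      next
        case False
        then show ?thesis using IH cspan_trans[OF d1] cu by auto
      qed
    qed
  qed
qed



definition box :: "nat \<Rightarrow> nat set set \<Rightarrow> nat \<times> nat \<Rightarrow> nat \<Rightarrow> nat \<Rightarrow> bool" where
  "box N T p i j \<longleftrightarrow> (\<forall>i'\<le>i. \<forall>j'\<le>j. okl N T (fst p + i', snd p + j'))"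

lemma okp_box: "box N T p i j \<Longrightarrow> cnt True w \<le> i \<Longrightarrow> cnt False w \<le> j \<Longrightarrow> okp N T p w"
proof (induction w arbitrary: p i j)
  case Nil
  then show ?case unfolding box_def by (metis add_0_right le0 okp.simps(1) prod.collapse)
next
  case (Cons b w)
  have h: "okl N T p" using Cons.prems(1) unfolding box_def by (metis add_0_right le0 prod.collapse)
  show ?case
  proof (cases b)
    case True
    have "box N T (stp p b) (i - 1) j" using Cons.prems(1,2) True unfolding box_def stp_def
      by (auto simp: le_diff_conv2)
    then have "okp N T (stp p b) w" using Cons True by (intro Cons.IH) auto
    then show ?thesis using h by simp
  next
    case False
    have "box N T (stp p b) i (j - 1)" using Cons.prems(1,3) False unfolding box_def stp_def
      by (auto simp: le_diff_conv2) (metis add_Suc_right Suc_leI)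
    then have "okp N T (stp p b) w" using Cons False by (intro Cons.IH) auto
    then show ?thesis using h by simp
  qed
qed

lemma canon_True: "canon True w = replicate (cnt True w) True @ replicate (cnt False w) False"
  unfolding canon_def by simp

lemma key_box:
  assumes g: "good N p" and ok: "okp N T p w" and e: "SS N (walk p w) = \<alpha>'"
    and nM: "delta (pivs N p w) \<notin> cspan (mesh_gens N T (SS N p) \<alpha>')"
  shows "box N T p (cnt True w) (cnt False w)"
  unfolding box_def
proof (intro allI impI, rule ccontr)
  let ?M = "cspan (mesh_gens N T (SS N p) \<alpha>')"
  fix i' j' assume le: "i' \<le> cnt True w" "j' \<le> cnt False w" and bad: "\<not> okl N T (fst p + i', snd p + j')"
  define i where "i = cnt True w"
  define j where "j = cnt False w"
  have s1: "okp N T p (canon True w) \<and> (\<lambda>x. delta (pivs N p w) x - delta (pivs N p (canon True w)) x) \<in> ?M"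
    using sort_ctx[OF g, of T "[]" w "[]" \<alpha>' True] ok e nM by simp
  define pre where "pre = replicate i' True"
  define u where "u = replicate (i - i') True @ replicate j' False"
  define suf where "suf = replicate (j - j') False"
  have z: "canon True w = pre @ u @ suf"
    unfolding canon_True pre_def u_def suf_def i_def[symmetric] j_def[symmetric]
    using le unfolding i_def[symmetric] j_def[symmetric]
    by (simp add: replicate_add[symmetric])
  have cu: "canon False u = replicate j' False @ replicate (i - i') True"
    unfolding canon_def u_def by simp
  have wz: "walk p (pre @ u @ suf) = walk p w"
    unfolding z[symmetric] by (simp add: walk_eq)
  have s2: "delta (pivs N p (pre @ u @ suf)) \<in> ?M \<or> (okp N T p (pre @ canon False u @ suf) \<and> True)"
    using sort_ctx[OF g, of T pre u suf \<alpha>' False] s1 z wz e by auto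
  have "\<not> okp N T p (pre @ canon False u @ suf)"
  proof
    assume "okp N T p (pre @ canon False u @ suf)"
    then have "okp N T p ((pre @ replicate j' False) @ (replicate (i - i') True @ suf))"
      unfolding cu by simp
    then have "okp N T p (pre @ replicate j' False)" unfolding okp_append by simp
    then have "okl N T (walk p (pre @ replicate j' False))" by (rule okp_last)
    then show False using bad unfolding pre_def by (simp add: walk_eq)
  qed
  then have "delta (pivs N p (canon True w)) \<in> ?M" using s2 z by simp
  then have "delta (pivs N p w) \<in> ?M" using cspan_diff_add s1 by blast
  then show False using nM by simp
qed

lemma box_good: "box N T p i j \<Longrightarrow> fst p + i + 2 \<le> snd p \<and> snd p + j + 2 \<le> fst p + N"
  unfolding box_def okl_def good_def
  by (metis add.right_neutral fst_conv le0 order_refl snd_conv)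

lemma box_uniq:
  assumes b1: "box N T p i1 j1" and b2: "box N T p i2 j2"
    and e: "SS N (fst p + i1, snd p + j1) = SS N (fst p + i2, snd p + j2)"
  shows "i1 = i2 \<and> j1 = j2"
proof -
  obtain x y where p: "p = (x, y)" by (cases p)
  have h1: "x + i1 + 2 \<le> y" "y + j1 + 2 \<le> x + N" using box_good[OF b1] p by auto
  have h2: "x + i2 + 2 \<le> y" "y + j2 + 2 \<le> x + N" using box_good[OF b2] p by auto
  have A: "((x + i1) mod N = (x + i2) mod N) = (x + i1 = x + i2)"
    by (rule modeq_window2[of x]) (use h1 h2 in auto)
  have B: "((y + j1) mod N = (y + j2) mod N) = (y + j1 = y + j2)"
    by (rule modeq_window2[of x]) (use h1 h2 in auto)
  have C: "((x + i1) mod N = (y + j2) mod N) = (x + i1 = y + j2)"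
    by (rule modeq_window2[of x]) (use h1 h2 in auto)
  have "((x + i1) mod N = (x + i2) mod N \<and> (y + j1) mod N = (y + j2) mod N) \<or>
        ((x + i1) mod N = (y + j2) mod N \<and> (y + j1) mod N = (x + i2) mod N)"
    using e unfolding SS_def p by (simp add: doubleton_eq_iff)
  then show ?thesis using A B C h1 h2 by auto
qed

lemma cnt_length: "length w = cnt True w + cnt False w"
  by (induction w) auto

lemma sum_delta_pair:
  assumes "finite A"
  shows "(\<Sum>P\<in>A. (if B1 then delta P1 P else 0) - (if B2 then delta P2 P else 0)) =
     (if B1 \<and> P1 \<in> A then 1 else 0) - (if B2 \<and> P2 \<in> A then 1 else 0)"
  using assms by (cases B1; cases B2) (simp_all add: sum_subtractf delta_def sum.delta sum_negf)

lemma phi_nonzero: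
  assumes g: "good N p" and bx: "box N T p i j"
  shows "delta (pivs N p (replicate i True @ replicate j False))
     \<notin> cspan (mesh_gens N T (SS N p) (SS N (fst p + i, snd p + j)))"
proof
  define \<alpha>' where "\<alpha>' = SS N (fst p + i, snd p + j)"
  define W where "W = {w. cnt True w = i \<and> cnt False w = j}"
  define PS where "PS = pivs N p ` W"
  have finW: "finite W"
  proof (rule finite_subset)
    show "W \<subseteq> {w. set w \<subseteq> UNIV \<and> length w = i + j}" unfolding W_def using cnt_length by auto
    show "finite {w. set w \<subseteq> (UNIV :: bool set) \<and> length w = i + j}" by (rule finite_lists_length_eq) simp
  qed
  have finPS: "finite PS" unfolding PS_def using finW by simp
  have okW: "w \<in> W \<Longrightarrow> okp N T p w" for w using okp_box[OF bx] unfolding W_def by simp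
  have inPS: "pivs N p w' \<in> PS \<longleftrightarrow> w' \<in> W" for w'
  proof
    assume "pivs N p w' \<in> PS"
    then obtain w where "w \<in> W" "pivs N p w' = pivs N p w" unfolding PS_def by auto
    then show "w' \<in> W" using pivs_inj okW by metis
  qed (simp add: PS_def)
  have walkW: "w \<in> W \<Longrightarrow> walk p w = (fst p + i, snd p + j)" for w unfolding W_def by (simp add: walk_eq)
  have mpW: "w \<in> W \<Longrightarrow> move_path N T (SS N p) (pivs N p w) \<alpha>'" for w
    unfolding mp_pivs2[OF g] \<alpha>'_def using okW walkW by simp
  have gen0: "(\<Sum>P\<in>PS. gg P) = 0" if gg: "gg \<in> mesh_gens N T (SS N p) \<alpha>'" for gg
  proof -
    obtain ps qs a b where ab: "a \<noteq> b" "move_path N T (SS N p) ps {a, b}"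
      "move_path N T {Suc a mod N, Suc b mod N} qs \<alpha>'"
      and ggdef: "gg = (\<lambda>x. (if move_path N T (SS N p) (ps @ [a, Suc b mod N] @ qs) \<alpha>'
                   then delta (ps @ [a, Suc b mod N] @ qs) x else 0)
                - (if move_path N T (SS N p) (ps @ [b, Suc a mod N] @ qs) \<alpha>'
                   then delta (ps @ [b, Suc a mod N] @ qs) x else 0))"
      using gg unfolding mesh_gens_def by blast
    obtain u where u: "ps = pivs N p u" "okp N T p u" "{a, b} = SS N (walk p u)"
      using mp_iff[OF g, THEN iffD1, OF ab(2)] by blast
    define q where "q = walk p u"
    define q2 where "q2 = (Suc (fst q), Suc (snd q))"
    have gq: "good N q" using okp_last[OF u(2)] okl_def q_def by auto
    have gq2: "good N q2" using gq unfolding good_def q2_def by auto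
    have abq: "(a = fst q mod N \<and> b = snd q mod N) \<or> (a = snd q mod N \<and> b = fst q mod N)"
      using u(3) unfolding q_def[symmetric] SS_def by (auto simp: doubleton_eq_iff)
    have e2: "SS N q2 = {Suc a mod N, Suc b mod N}"
      using abq unfolding SS_def q2_def by (auto simp: mod_Suc_eq)
    have "move_path N T (SS N q2) qs \<alpha>'" using ab(3) e2 by simp
    then obtain v where v: "qs = pivs N q2 v"
      using mp_iff[OF gq2, THEN iffD1] by blast
    have wq2: "walk q [True, False] = q2" "walk q [False, True] = q2" unfolding q2_def by (simp_all add: walk_eq)
    have pv: "pivs N p (u @ [c1, c2] @ v) = ps @ [pvt N q c1, pvt N (stp q c1) c2] @ pivs N (stp (stp q c1) c2) v" for c1 c2
      unfolding u(1) pivs_append q_def by simp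
    have st: "stp (stp q True) False = q2" "stp (stp q False) True = q2" unfolding q2_def stp_def by simp_all
    have pv1: "pvt N q True = snd q mod N" "pvt N q False = fst q mod N"
      "pvt N (stp q True) False = Suc (fst q mod N) mod N" "pvt N (stp q False) True = Suc (snd q mod N) mod N"
      unfolding pvt_def stp_def by (simp_all add: mod_Suc_eq)
    have cw: "cnt c (u @ [c1, c2] @ v) = cnt c (u @ [c2, c1] @ v)" for c c1 c2 by simp
    have ww: "walk p (u @ [c1, c2] @ v) = walk p (u @ [c2, c1] @ v)" for c1 c2 by (simp add: walk_eq)
    obtain w1 w2 where w12: "ps @ [a, Suc b mod N] @ qs = pivs N p w1" "ps @ [b, Suc a mod N] @ qs = pivs N p w2"
      "\<And>c. cnt c w1 = cnt c w2" "walk p w1 = walk p w2"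
    proof (cases "a = fst q mod N \<and> b = snd q mod N")
      case True
      have "ps @ [a, Suc b mod N] @ qs = pivs N p (u @ [False, True] @ v)"
        unfolding pv st pv1 v using True by simp
      moreover have "ps @ [b, Suc a mod N] @ qs = pivs N p (u @ [True, False] @ v)"
        unfolding pv st pv1 v using True by simp
      ultimately show ?thesis using that cw ww by blast
    next
      case False
      then have ab2: "a = snd q mod N" "b = fst q mod N" using abq by auto
      have "ps @ [a, Suc b mod N] @ qs = pivs N p (u @ [True, False] @ v)"
        unfolding pv st pv1 v using ab2 by simp
      moreover have "ps @ [b, Suc a mod N] @ qs = pivs N p (u @ [False, True] @ v)"
        unfolding pv st pv1 v using ab2 by simp
      ultimately show ?thesis using that cw ww by blast
    qed
    have "(\<Sum>P\<in>PS. gg P) =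
      (if move_path N T (SS N p) (pivs N p w1) \<alpha>' \<and> pivs N p w1 \<in> PS then 1 else 0)
      - (if move_path N T (SS N p) (pivs N p w2) \<alpha>' \<and> pivs N p w2 \<in> PS then 1 else 0)"
      unfolding ggdef w12(1,2) by (rule sum_delta_pair[OF finPS])
    also have "\<dots> = 0"
    proof (cases "w1 \<in> W")
      case True
      then have "w2 \<in> W" using w12(3)[of True] w12(3)[of False] unfolding W_def by simp
      then show ?thesis using True mpW inPS by simp
    next
      case False
      then have "w2 \<notin> W" using w12(3)[of True] w12(3)[of False] unfolding W_def by simp
      then show ?thesis using False inPS by simp
    qed
    finally show ?thesis .
  qed
  assume "delta (pivs N p (replicate i True @ replicate j False)) \<in> cspan (mesh_gens N T (SS N p) (SS N (fst p + i, snd p + j)))"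
  then have "(\<Sum>P\<in>PS. delta (pivs N p (replicate i True @ replicate j False)) P) = 0"
    using cspan_lin[OF finPS gen0] unfolding \<alpha>'_def by blast
  moreover have "pivs N p (replicate i True @ replicate j False) \<in> PS"
    unfolding inPS W_def by simp
  ultimately show False using finPS by (simp add: delta_def sum.delta)
qed



lemma is_diag_elems: "is_diag N d \<Longrightarrow> \<exists>a b. d = {a, b} \<and> a < N \<and> b < N \<and> a \<noteq> b"
  unfolding is_diag_def by blast

lemma lift_mod:
  fixes a v N :: nat
  assumes "v < N"
  shows "(a + (v + N - a mod N) mod N) mod N = v" and "a \<le> a + (v + N - a mod N) mod N"
    and "a + (v + N - a mod N) mod N < a + N"
proof -
  have N0: "N > 0" using assms by simp
  have am: "a mod N < N" using N0 by simp
  have "(a + (v + N - a mod N) mod N) mod N = (a + (v + N - a mod N)) mod N" by (simp add: mod_add_right_eq)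
  also have "a + (v + N - a mod N) = v + N * (a div N + 1)"
  proof -
    obtain k m where km: "a div N = k" "a mod N = m" by blast
    have a: "a = N * k + m" using km div_mult_mod_eq[of a N] by (simp add: mult.commute)
    have "m < N" using am km by simp
    then have "N * k + m + (v + N - m) = v + N * (k + 1)" by simp
    then show ?thesis unfolding km using a by simp
  qed
  also have "(v + N * (a div N + 1)) mod N = v" using assms by (simp only: mod_mult_self2 mod_less)
  finally show "(a + (v + N - a mod N) mod N) mod N = v" .
  show "a \<le> a + (v + N - a mod N) mod N" by simp
  show "a + (v + N - a mod N) mod N < a + N" using N0 by simp
qed

lemma lift_diag:
  assumes "is_diag N e"
  shows "\<exists>s t. a \<le> s \<and> s < t \<and> t < a + N \<and> e = {s mod N, t mod N}"
proof -
  obtain e1 e2 where e: "e = {e1, e2}" "e1 < N" "e2 < N" "e1 \<noteq> e2" using is_diag_elems[OF assms] by blast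
  define l where "l v = a + (v + N - a mod N) mod N" for v
  have l1: "l e1 mod N = e1" "a \<le> l e1" "l e1 < a + N" using lift_mod[OF e(2), of a] unfolding l_def by auto
  have l2: "l e2 mod N = e2" "a \<le> l e2" "l e2 < a + N" using lift_mod[OF e(3), of a] unfolding l_def by auto
  have "l e1 \<noteq> l e2" using l1 l2 e(4) by metis
  then show ?thesis
  proof (cases "l e1 < l e2")
    case True
    then show ?thesis using l1 l2 e by (intro exI[of _ "l e1"] exI[of _ "l e2"]) auto
  next
    case False
    then have "l e2 < l e1" using \<open>l e1 \<noteq> l e2\<close> by simp
    then show ?thesis using l1 l2 e by (intro exI[of _ "l e2"] exI[of _ "l e1"]) auto
  qed
qed

lemma hex:
  assumes tri: "triangulation N T" and ab: "a \<le> b" and bc: "b + 2 \<le> c" and cd: "c \<le> d"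
    and da: "d + 2 \<le> a + N"
    and bx: "\<And>p r. a \<le> p \<Longrightarrow> p \<le> b \<Longrightarrow> c \<le> r \<Longrightarrow> r \<le> d \<Longrightarrow> SS N (p, r) \<notin> T"
  shows "\<exists>q s. b < q \<and> q < c \<and> d < s \<and> s < a + N \<and> {q mod N, s mod N} \<in> T"
proof -
  have diagT: "\<And>e. e \<in> T \<Longrightarrow> is_diag N e" and nc: "\<And>e f. e \<in> T \<Longrightarrow> f \<in> T \<Longrightarrow> \<not> crosses N e f"
    and mx: "\<And>e. is_diag N e \<Longrightarrow> e \<notin> T \<Longrightarrow> \<exists>f\<in>T. crosses N e f"
    using tri unfolding triangulation_def by blast+
  define KR where "KR = {(q, r). b < q \<and> q < c \<and> c < r \<and> r \<le> d \<and> {q mod N, r mod N} \<in> T}"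
  define KP where "KP = {(q, s). b < q \<and> q < c \<and> a \<le> s \<and> s < b \<and> {q mod N, s mod N} \<in> T}"
  have finR: "finite KR" by (rule finite_subset[of _ "{..c} \<times> {..d}"]) (auto simp: KR_def)
  have finP: "finite KP" by (rule finite_subset[of _ "{..c} \<times> {..b}"]) (auto simp: KP_def)
  define E2 where "E2 = (if KR = {} then c else Max (snd ` KR))"
  define F2 where "F2 = (if KP = {} then b else Min (snd ` KP))"
  have E2R: "KR \<noteq> {} \<Longrightarrow> \<exists>e1. (e1, E2) \<in> KR"
  proof -
    assume "KR \<noteq> {}"
    then have "E2 \<in> snd ` KR" unfolding E2_def using finR by (simp add: Max_in)
    then show ?thesis by force
  qed
  have E2max: "(q, r) \<in> KR \<Longrightarrow> r \<le> E2" for q r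
  proof -
    assume qr: "(q, r) \<in> KR"
    then have "r \<in> snd ` KR" by force
    then show ?thesis unfolding E2_def using qr finR by (auto intro: Max_ge)
  qed
  have F2P: "KP \<noteq> {} \<Longrightarrow> \<exists>f1. (f1, F2) \<in> KP"
  proof -
    assume "KP \<noteq> {}"
    then have "F2 \<in> snd ` KP" unfolding F2_def using finP by (simp add: Min_in)
    then show ?thesis by force
  qed
  have F2min: "(q, s) \<in> KP \<Longrightarrow> F2 \<le> s" for q s
  proof -
    assume qs: "(q, s) \<in> KP"
    then have "s \<in> snd ` KP" by force
    then show ?thesis unfolding F2_def using qs finP by (auto intro: Min_le)
  qed
  have E2b: "c \<le> E2 \<and> E2 \<le> d"
  proof (cases "KR = {}")
    case True then show ?thesis using cd unfolding E2_def by simp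
  next
    case False then obtain e1 where "(e1, E2) \<in> KR" using E2R by blast
    then show ?thesis unfolding KR_def by auto
  qed
  have F2b: "a \<le> F2 \<and> F2 \<le> b"
  proof (cases "KP = {}")
    case True then show ?thesis using ab unfolding F2_def by simp
  next
    case False then obtain f1 where "(f1, F2) \<in> KP" using F2P by blast
    then show ?thesis unfolding KP_def by auto
  qed
  have gD: "good N (F2, E2)" unfolding good_def using E2b F2b bc da by auto
  have dD: "is_diag N (SS N (F2, E2))" using diag_SS[of "(F2, E2)" N] gD unfolding good_def by auto
  have nD: "SS N (F2, E2) \<notin> T" using bx F2b E2b by blast
  obtain h where h: "h \<in> T" "crosses N (SS N (F2, E2)) h" using mx[OF dD nD] by blast
  obtain s t where st: "a \<le> s" "s < t" "t < a + N" "h = {s mod N, t mod N}"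
    using lift_diag[OF diagT[OF h(1)], of a] by blast
  have cw: "(F2 < s \<and> s < E2 \<and> (t < F2 \<or> E2 < t)) \<or> (F2 < t \<and> t < E2 \<and> (s < F2 \<or> E2 < s))"
    using h(2) crosses_window[of a F2 E2 N s t] st F2b E2b bc da unfolding SS_def by auto
  obtain h1 h2 where hh: "a \<le> h1" "h1 < a + N" "a \<le> h2" "h2 < a + N" "h = {h1 mod N, h2 mod N}"
    "F2 < h1" "h1 < E2" "h2 < F2 \<or> E2 < h2"
  proof (cases "F2 < s \<and> s < E2 \<and> (t < F2 \<or> E2 < t)")
    case True
    then show ?thesis using that[of s t] st by auto
  next
    case False
    then have "F2 < t \<and> t < E2 \<and> (s < F2 \<or> E2 < s)" using cw by blast
    then show ?thesis using that[of t s] st by (auto simp: insert_commute)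
  qed
  have h1b: "b < h1"
  proof (cases "KP = {}")
    case True then show ?thesis using hh unfolding F2_def by simp
  next
    case False
    then obtain f1 where f: "(f1, F2) \<in> KP" using F2P by blast
    then have f': "b < f1" "f1 < c" "{F2 mod N, f1 mod N} \<in> T" unfolding KP_def by (auto simp: insert_commute)
    have "\<not> crosses N {F2 mod N, f1 mod N} h" using nc[OF f'(3) h(1)] .
    then have "\<not> (F2 < h1 \<and> h1 < f1 \<and> (h2 < F2 \<or> f1 < h2))"
      using crosses_window[of a F2 f1 N h1 h2] hh f' F2b E2b bc da by auto
    then show ?thesis using hh f' E2b by auto
  qed
  have h1c: "h1 < c"
  proof (cases "KR = {}")
    case True then show ?thesis using hh unfolding E2_def by simp
  next
    case False
    then obtain e1 where e: "(e1, E2) \<in> KR" using E2R by blast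
    then have e': "b < e1" "e1 < c" "{e1 mod N, E2 mod N} \<in> T" unfolding KR_def by auto
    have "\<not> crosses N {e1 mod N, E2 mod N} h" using nc[OF e'(3) h(1)] .
    then have "\<not> (e1 < h1 \<and> h1 < E2 \<and> (h2 < e1 \<or> E2 < h2))"
      using crosses_window[of a e1 E2 N h1 h2] hh e' F2b E2b bc da by auto
    then show ?thesis using hh e' F2b by auto
  qed
  have hT: "{h1 mod N, h2 mod N} \<in> T" using hh h(1) by simp
  show ?thesis
  proof (cases "h2 < F2")
    case True
    then have "(h1, h2) \<in> KP" unfolding KP_def using h1b h1c hh F2b hT by auto
    then show ?thesis using F2min True by fastforce
  next
    case False
    then have E: "E2 < h2" using hh by auto
    show ?thesis
    proof (cases "h2 \<le> d")
      case True
      then have "(h1, h2) \<in> KR" unfolding KR_def using h1b h1c hh E2b E hT by auto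
      then show ?thesis using E2max E by fastforce
    next
      case False
      then show ?thesis using h1b h1c hh hT by (intro exI[of _ h1] exI[of _ h2]) auto
    qed
  qed
qed



lemma pos_root_lift:
  assumes "pos_root N T \<alpha>"
  shows "\<exists>p. good N p \<and> SS N p = \<alpha>"
proof -
  obtain a b where e: "\<alpha> = {a, b}" "a < N" "b < N" "a \<noteq> b"
    using is_diag_elems assms unfolding pos_root_def by blast
  define p where "p = (min a b, max a b)"
  have "SS N p = \<alpha>" unfolding SS_def p_def e using e by (auto simp: min_def max_def)
  moreover have "is_diag N (SS N p)" using assms calculation unfolding pos_root_def by simp
  moreover have "fst p < snd p" "snd p < fst p + N" unfolding p_def using e by auto
  ultimately show ?thesis using diag_SS by blast
qed

lemma cpos_lt: "0 < N \<Longrightarrow> cpos N a b < N"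
  unfolding cpos_def by simp

lemma lift_cpos: "v < N \<Longrightarrow> u < N \<Longrightarrow> (v + cpos N v u) mod N = u"
  using lift_mod(1)[of u N v] unfolding cpos_def by simp

lemma cps: "z < s \<Longrightarrow> s < z + N \<Longrightarrow> cpos N (s mod N) (z mod N) = z + N - s"
  using cpos_window[where a=s and u=s and v="z + N" and N=N] by simp

lemma diag_lt: "is_diag N d \<Longrightarrow> x \<in> d \<Longrightarrow> x < N"
  unfolding is_diag_def by auto

lemma box_crit:
  assumes tri: "triangulation N T" and g: "good N p" and bx: "box N T p i j"
    and e1: "SS N p = \<alpha>" and e2: "SS N (fst p + i, snd p + j) = \<alpha>'"
  shows "hom_criterion N T \<alpha> \<alpha>'"
proof -
  obtain x y where p: "p = (x, y)" by (cases p)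
  have h: "x + i + 2 \<le> y" "y + j + 2 \<le> x + N" using box_good[OF bx] p by auto
  have bxx: "SS N (p', r) \<notin> T" if "x \<le> p'" "p' \<le> x + i" "y \<le> r" "r \<le> y + j" for p' r
  proof -
    have le: "p' - x \<le> i" "r - y \<le> j" using that by auto
    then have "okl N T (x + (p' - x), y + (r - y))" using bx unfolding box_def p by simp
    moreover have "x + (p' - x) = p'" "y + (r - y) = r" using that by auto
    ultimately show ?thesis unfolding okl_def by simp
  qed
  obtain q s where qs: "x + i < q" "q < y" "y + j < s" "s < x + N" "{q mod N, s mod N} \<in> T"
    using hex[OF tri _ _ _ _ bxx, of x "x + i" y "y + j"] h by auto
  define I where "I = {q mod N, s mod N}"
  have cr1: "crosses N I \<alpha>"
    unfolding I_def e1[symmetric] p SS_def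
    using crosses_window[of x q s N x y] qs h by auto
  have cr2: "crosses N I \<alpha>'"
    unfolding I_def e2[symmetric] p SS_def
    using crosses_window[of x q s N "x + i" "y + j"] qs h by auto
  have c1: "cpos N (s mod N) (x mod N) = x + N - s" using cps[of x s N] qs h by simp
  have c2: "cpos N (s mod N) ((x + i) mod N) = x + i + N - s" using cps[of "x + i" s N] qs h by simp
  have c3: "cpos N (s mod N) (q mod N) = q + N - s" using cps[of q s N] qs h by simp
  have c4: "cpos N (s mod N) (y mod N) = y + N - s" using cps[of y s N] qs h by simp
  have c5: "cpos N (s mod N) ((y + j) mod N) = y + j + N - s" using cps[of "y + j" s N] qs h by simp
  show ?thesis unfolding hom_criterion_def
  proof (rule bexI[of _ I])
    show "I \<in> supp N T \<alpha> \<inter> supp N T \<alpha>'" unfolding supp_def using cr1 cr2 qs(5) I_def by auto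
    show "\<exists>v1 v2 u1 u2 u1' u2'. I = {v1, v2} \<and> \<alpha> = {u1, u2} \<and> \<alpha>' = {u1', u2'} \<and>
        0 < cpos N v1 u1 \<and> cpos N v1 u1 \<le> cpos N v1 u1' \<and> cpos N v1 u1' < cpos N v1 v2 \<and>
        cpos N v1 v2 < cpos N v1 u2 \<and> cpos N v1 u2 \<le> cpos N v1 u2'"
      apply (rule exI[of _ "s mod N"], rule exI[of _ "q mod N"], rule exI[of _ "x mod N"],
          rule exI[of _ "y mod N"], rule exI[of _ "(x + i) mod N"], rule exI[of _ "(y + j) mod N"])
      unfolding c1 c2 c3 c4 c5 using qs h e1 e2 unfolding I_def SS_def p
      by (auto simp: insert_commute)
  qed
qed

lemma crit_box:
  assumes tri: "triangulation N T" and pa: "pos_root N T \<alpha>" and pa': "pos_root N T \<alpha>'"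
    and cr: "hom_criterion N T \<alpha> \<alpha>'"
  shows "\<exists>p i j. good N p \<and> SS N p = \<alpha> \<and> box N T p i j \<and> SS N (fst p + i, snd p + j) = \<alpha>'"
proof -
  obtain I v1 v2 u1 u2 u1' u2' where I: "I \<in> T" "I = {v1, v2}" "\<alpha> = {u1, u2}" "\<alpha>' = {u1', u2'}"
    and ineq: "0 < cpos N v1 u1" "cpos N v1 u1 \<le> cpos N v1 u1'" "cpos N v1 u1' < cpos N v1 v2"
      "cpos N v1 v2 < cpos N v1 u2" "cpos N v1 u2 \<le> cpos N v1 u2'"
    using cr unfolding hom_criterion_def supp_def by blast
  have nc: "\<And>e f. e \<in> T \<Longrightarrow> f \<in> T \<Longrightarrow> \<not> crosses N e f" using tri unfolding triangulation_def by blast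
  have dI: "is_diag N I" using tri I(1) unfolding triangulation_def by blast
  have lv: "v1 < N" "v2 < N" using diag_lt[OF dI] I(2) by auto
  have lu: "u1 < N" "u2 < N" using diag_lt pa I(3) unfolding pos_root_def by auto
  have lu': "u1' < N" "u2' < N" using diag_lt pa' I(4) unfolding pos_root_def by auto
  have N0: "0 < N" using lv by simp
  define cp where "cp = cpos N v1"
  have cpl: "cp u2' < N" unfolding cp_def using cpos_lt[OF N0] .
  define p where "p = (v1 + cp u1, v1 + cp u2)"
  define i where "i = cp u1' - cp u1"
  define j where "j = cp u2' - cp u2"
  define V where "V = v1 + cp v2"
  have m: "(v1 + cp z) mod N = z" if "z < N" for z unfolding cp_def using lift_cpos[OF lv(1) that] .
  have ineq': "0 < cp u1" "cp u1 \<le> cp u1'" "cp u1' < cp v2" "cp v2 < cp u2" "cp u2 \<le> cp u2'"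
    using ineq unfolding cp_def by auto
  have g: "good N p" unfolding good_def p_def using ineq' cpl by auto
  have s1: "SS N p = \<alpha>" unfolding SS_def p_def I(3) using m lu by simp
  have s2: "SS N (fst p + i, snd p + j) = \<alpha>'"
    unfolding SS_def p_def I(4) i_def j_def using m lu' ineq' by simp
  have Ieq: "I = {v1 mod N, V mod N}" unfolding V_def using I(2) m lv by simp
  have bx: "box N T p i j" unfolding box_def
  proof (intro allI impI)
    fix i' j' assume le: "i' \<le> i" "j' \<le> j"
    define x' where "x' = fst p + i'"
    define y' where "y' = snd p + j'"
    have r: "v1 < x'" "x' < V" "V < y'" "y' < v1 + N"
      unfolding x'_def y'_def p_def V_def using le ineq' cpl unfolding i_def j_def by auto
    have "good N (x', y')" unfolding good_def using r le ineq' cpl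
      unfolding x'_def y'_def p_def i_def j_def by auto
    moreover have "crosses N I (SS N (x', y'))"
      unfolding Ieq SS_def using crosses_window[of v1 v1 V N x' y'] r by auto
    then have "SS N (x', y') \<notin> T" using nc I(1) by blast
    ultimately show "okl N T (fst p + i', snd p + j')" unfolding okl_def x'_def y'_def by simp
  qed
  show ?thesis using g s1 s2 bx by blast
qed

theorem mainTheorem10:
  fixes n :: nat and T :: "nat set set" and \<alpha> \<alpha>' :: "nat set"
  assumes "triangulation (n + 3) T"
    and "pos_root (n + 3) T \<alpha>" and "pos_root (n + 3) T \<alpha>'"
  shows "(hom_nonzero (n + 3) T \<alpha> \<alpha>' \<longleftrightarrow> hom_criterion (n + 3) T \<alpha> \<alpha>')
     \<and> (hom_criterion (n + 3) T \<alpha> \<alpha>' \<longrightarrow> hom_dim (n + 3) T \<alpha> \<alpha>' = 1)"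
proof -
  define N where "N = n + 3"
  have tri: "triangulation N T" and pa: "pos_root N T \<alpha>" and pa': "pos_root N T \<alpha>'"
    using assms unfolding N_def by auto
  let ?M = "cspan (mesh_gens N T \<alpha> \<alpha>')"
  have A: "hom_criterion N T \<alpha> \<alpha>'" if hz: "hom_nonzero N T \<alpha> \<alpha>'"
  proof -
    obtain ps where ps: "move_path N T \<alpha> ps \<alpha>'" "delta ps \<notin> ?M"
      using hz unfolding hom_nonzero_def by blast
    obtain p where p: "good N p" "SS N p = \<alpha>" using pos_root_lift[OF pa] by blast
    obtain w where w: "ps = pivs N p w" "okp N T p w" "\<alpha>' = SS N (walk p w)"
      using mp_iff[OF p(1), THEN iffD1] ps(1) p(2) by blast
    have bx: "box N T p (cnt True w) (cnt False w)"
      using key_box[OF p(1) w(2) w(3)[symmetric]] ps(2) w(1) p(2) by simp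
    show ?thesis using box_crit[OF tri p(1) bx p(2)] w(3) by (simp add: walk_eq)
  qed
  have B: "hom_nonzero N T \<alpha> \<alpha>' \<and> hom_dim N T \<alpha> \<alpha>' = 1" if cr: "hom_criterion N T \<alpha> \<alpha>'"
  proof -
    obtain p i j where p: "good N p" "SS N p = \<alpha>" "box N T p i j" "SS N (fst p + i, snd p + j) = \<alpha>'"
      using crit_box[OF tri pa pa' cr] by blast
    define w0 where "w0 = replicate i True @ replicate j False"
    define ps0 where "ps0 = pivs N p w0"
    have ok0: "okp N T p w0" unfolding w0_def by (rule okp_box[OF p(3)]) simp_all
    have mp0: "move_path N T \<alpha> ps0 \<alpha>'"
      unfolding ps0_def p(2)[symmetric] mp_pivs2[OF p(1)] using ok0 p(4) unfolding w0_def by (simp add: walk_eq)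
    have nz0: "delta ps0 \<notin> ?M"
      using phi_nonzero[OF p(1) p(3)] p(2) p(4) unfolding ps0_def w0_def by simp
    have hz: "hom_nonzero N T \<alpha> \<alpha>'" unfolding hom_nonzero_def using mp0 nz0 by blast
    have span1: "delta ps \<in> cspan (delta ` {ps0} \<union> mesh_gens N T \<alpha> \<alpha>')" if mp: "move_path N T \<alpha> ps \<alpha>'" for ps
    proof (cases "delta ps \<in> ?M")
      case True
      then show ?thesis using cspan_mono[of "mesh_gens N T \<alpha> \<alpha>'"] by blast
    next
      case False
      obtain w where w: "ps = pivs N p w" "okp N T p w" "\<alpha>' = SS N (walk p w)"
        using mp_iff[OF p(1), THEN iffD1] mp p(2) by blast
      have bx: "box N T p (cnt True w) (cnt False w)"
        using key_box[OF p(1) w(2) w(3)[symmetric]] False w(1) p(2) by simp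
      have "SS N (fst p + cnt True w, snd p + cnt False w) = SS N (fst p + i, snd p + j)"
        using w(3) p(4) by (simp add: walk_eq)
      then have cnts: "cnt True w = i" "cnt False w = j" using box_uniq[OF bx p(3)] by auto
      have "okp N T p (canon True w) \<and> (\<lambda>x. delta (pivs N p w) x - delta (pivs N p (canon True w)) x) \<in> ?M"
        using sort_ctx[OF p(1), of T "[]" w "[]" \<alpha>' True] w False p(2) by simp
      moreover have "canon True w = w0" unfolding w0_def canon_True cnts ..
      ultimately have d: "(\<lambda>x. delta ps x - delta ps0 x) \<in> ?M" unfolding ps0_def w(1) by simp
      have "(\<lambda>x. delta ps x - delta ps0 x) \<in> cspan (delta ` {ps0} \<union> mesh_gens N T \<alpha> \<alpha>')"
        using d cspan_mono[of "mesh_gens N T \<alpha> \<alpha>'"] by blast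
      moreover have "delta ps0 \<in> cspan (delta ` {ps0} \<union> mesh_gens N T \<alpha> \<alpha>')" by (rule cspan_base) simp
      ultimately show ?thesis by (rule cspan_diff_add)
    qed
    have "hom_dim N T \<alpha> \<alpha>' = 1"
      unfolding hom_dim_def
    proof (rule Least_equality)
      show "\<exists>S. finite S \<and> card S = 1 \<and> (\<forall>s\<in>S. move_path N T \<alpha> s \<alpha>') \<and>
          (\<forall>ps. move_path N T \<alpha> ps \<alpha>' \<longrightarrow> delta ps \<in> cspan (delta ` S \<union> mesh_gens N T \<alpha> \<alpha>'))"
        using mp0 span1 by (intro exI[of _ "{ps0}"]) auto
    next
      fix k assume "\<exists>S. finite S \<and> card S = k \<and> (\<forall>s\<in>S. move_path N T \<alpha> s \<alpha>') \<and>
          (\<forall>ps. move_path N T \<alpha> ps \<alpha>' \<longrightarrow> delta ps \<in> cspan (delta ` S \<union> mesh_gens N T \<alpha> \<alpha>'))"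
      then obtain S where S: "finite S" "card S = k"
        "\<forall>ps. move_path N T \<alpha> ps \<alpha>' \<longrightarrow> delta ps \<in> cspan (delta ` S \<union> mesh_gens N T \<alpha> \<alpha>')" by blast
      show "1 \<le> k"
      proof (rule ccontr)
        assume "\<not> 1 \<le> k"
        then have "card S = 0" using S(2) by simp
        then have "S = {}" using S(1) by simp
        then show False using S(3) mp0 nz0 by simp
      qed
    qed
    then show ?thesis using hz by simp
  qed
  show ?thesis using A B unfolding N_def[symmetric] by blast
qed

end
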